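(* Suppose Assumptions (A1), (A2), (A3) and (SC) hold. Then for every $i\in\{1,\dots,k\}$, $\frac{t}{-h_i(x,y_t^*(x))}\to\lambda_i(x)$ as $t\to0^+$, uniformly in $x\in\mathcal{X}$; that is, for every $\epsilon>0$ there is $T>0$ such that $\big|\lambda_i(x)-\frac{t}{-h_i(x,y_t^*(x))}\big|\le\epsilon$ for all $x\in\mathcal{X}$ and $0<t\le T$.
   Context: Let $f,g,h_1,\dots,h_k:\mathbb{R}^n\times\mathbb{R}^m\to\mathbb{R}$ and $\mathcal{X}\subseteq\mathbb{R}^n$. For $x\in\mathcal{X}$ let $\mathcal{Y}(x)=\{y: h_i(x,y)\le 0,\ i=1,\dots,k\}$ and $y^*(x)=\arg\min_{y\in\mathcal{Y}(x)} g(x,y)$ (a singleton under (SC)). For $t>0$ let $\widetilde g_t(x,y)=g(x,y)-t\sum_{i=1}^k\log(-h_i(x,y))$ and $y_t^*(x)=\arg\min_y\widetilde g_t(x,y)$. $\lambda_i(x)\ge0$ denotes the optimal KKT multiplier of the $i$-th constraint at $y^*(x)$. Assumptions: (A1) $f$ once and $g,h_i$ twice continuously differentiable; (A2) $\mathcal{X}$ convex and compact and for every $x\in\mathcal{X}$ there is $y$ with $h_i(x,y)<0$ for all $i$; (A3) (LICQ) for every $x\in\mathcal{X}$ and $y\in y^*(x)$, $\{\nabla_y h_i(x,y): h_i(x,y)=0\}$ is linearly independent; (SC) for every $x\in\mathcal{X}$, $g(x,\cdot)$ is $\mu_g$-strongly convex and each $h_i(x,\cdot)$ convex. *)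

theory Defs
  imports "HOL-Analysis.Analysis"
begin

definition C1_fun :: "('a::real_normed_vector \<Rightarrow> real) \<Rightarrow> bool" where
  "C1_fun F \<longleftrightarrow> (\<exists>F'. (\<forall>z. (F has_derivative blinfun_apply (F' z)) (at z))
                      \<and> continuous_on UNIV F')"

definition C2_fun :: "('a::real_normed_vector \<Rightarrow> real) \<Rightarrow> bool" where
  "C2_fun F \<longleftrightarrow> (\<exists>F' F''. (\<forall>z. (F has_derivative blinfun_apply (F' z)) (at z))
                      \<and> (\<forall>z. (F' has_derivative blinfun_apply (F'' z)) (at z))
                      \<and> continuous_on UNIV F'')"

definition strongly_convex_on :: "'a::real_normed_vector set \<Rightarrow> real \<Rightarrow> ('a \<Rightarrow> real) \<Rightarrow> bool" where
  "strongly_convex_on S \<mu> \<phi> \<longleftrightarrow>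
     (\<forall>a\<in>S. \<forall>b\<in>S. \<forall>\<theta>::real. 0 \<le> \<theta> \<and> \<theta> \<le> 1 \<longrightarrow>
        \<phi> (\<theta> *\<^sub>R a + (1 - \<theta>) *\<^sub>R b)
          \<le> \<theta> * \<phi> a + (1 - \<theta>) * \<phi> b - \<mu> / 2 * \<theta> * (1 - \<theta>) * (norm (a - b))\<^sup>2)"

text \<open>Constraints are indexed by i < k (i.e. 0..k-1 instead of 1..k).\<close>

definition feas ::
  "(nat \<Rightarrow> 'x \<Rightarrow> 'y \<Rightarrow> real) \<Rightarrow> nat \<Rightarrow> 'x \<Rightarrow> 'y set" where
  "feas h k x = {y. \<forall>i<k. h i x y \<le> 0}"

definition ystar ::
  "('x \<Rightarrow> 'y \<Rightarrow> real) \<Rightarrow> (nat \<Rightarrow> 'x \<Rightarrow> 'y \<Rightarrow> real) \<Rightarrow> nat \<Rightarrow> 'x \<Rightarrow> 'y" where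
  "ystar g h k x = (THE y. y \<in> feas h k x \<and> (\<forall>z\<in>feas h k x. g x y \<le> g x z))"

definition gbar ::
  "('x \<Rightarrow> 'y \<Rightarrow> real) \<Rightarrow> (nat \<Rightarrow> 'x \<Rightarrow> 'y \<Rightarrow> real) \<Rightarrow> nat \<Rightarrow> real \<Rightarrow> 'x \<Rightarrow> 'y \<Rightarrow> real" where
  "gbar g h k t x y = g x y - t * (\<Sum>i<k. ln (- h i x y))"

definition ybar ::
  "('x \<Rightarrow> 'y \<Rightarrow> real) \<Rightarrow> (nat \<Rightarrow> 'x \<Rightarrow> 'y \<Rightarrow> real) \<Rightarrow> nat \<Rightarrow> real \<Rightarrow> 'x \<Rightarrow> 'y" where
  "ybar g h k t x = (THE y. (\<forall>i<k. h i x y < 0) \<and>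
       (\<forall>z. (\<forall>i<k. h i x z < 0) \<longrightarrow> gbar g h k t x y \<le> gbar g h k t x z))"

definition grad_y :: "('x \<Rightarrow> 'y::real_inner \<Rightarrow> real) \<Rightarrow> 'x \<Rightarrow> 'y \<Rightarrow> 'y" where
  "grad_y F x y = (THE D. ((\<lambda>v. F x v) has_derivative (\<lambda>w. D \<bullet> w)) (at y))"

definition is_KKT_mult ::
  "('x \<Rightarrow> 'y::real_inner \<Rightarrow> real) \<Rightarrow> (nat \<Rightarrow> 'x \<Rightarrow> 'y \<Rightarrow> real) \<Rightarrow> nat \<Rightarrow> 'x \<Rightarrow> (nat \<Rightarrow> real) \<Rightarrow> bool" where
  "is_KKT_mult g h k x lam \<longleftrightarrow>
     (\<forall>i<k. 0 \<le> lam i \<and> lam i * h i x (ystar g h k x) = 0) \<and> (\<forall>i\<ge>k. lam i = 0) \<and>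
     grad_y g x (ystar g h k x) + (\<Sum>i<k. lam i *\<^sub>R grad_y (h i) x (ystar g h k x)) = 0"

definition lambda ::
  "('x \<Rightarrow> 'y::real_inner \<Rightarrow> real) \<Rightarrow> (nat \<Rightarrow> 'x \<Rightarrow> 'y \<Rightarrow> real) \<Rightarrow> nat \<Rightarrow> 'x \<Rightarrow> nat \<Rightarrow> real" where
  "lambda g h k x = (THE lam. is_KKT_mult g h k x lam)"

end

theory Submission
  imports Defs
begin


lemma tangent_ineq:
  fixes F :: "'a::real_inner \<Rightarrow> real"
  assumes mu: "\<mu> \<ge> 0"
    and sc: "\<And>a b \<theta>. 0 \<le> \<theta> \<Longrightarrow> \<theta> \<le> 1 \<Longrightarrow>
        F (\<theta> *\<^sub>R a + (1-\<theta>) *\<^sub>R b) \<le> \<theta> * F a + (1-\<theta>) * F b - \<mu>/2*\<theta>*(1-\<theta>)*(norm(a-b))\<^sup>2"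
    and d: "(F has_derivative (\<lambda>w. D \<bullet> w)) (at y)"
  shows "F z \<ge> F y + D \<bullet> (z - y) + \<mu>/2 * (norm (z-y))\<^sup>2"
proof -
  define \<phi> where "\<phi> \<theta> = F (y + \<theta> *\<^sub>R (z - y))" for \<theta> :: real
  have "((\<lambda>\<theta>::real. y + \<theta> *\<^sub>R (z-y)) has_derivative (\<lambda>\<theta>. \<theta> *\<^sub>R (z-y))) (at 0)"
    by (auto intro!: derivative_eq_intros)
  moreover have "(F has_derivative (\<lambda>w. D \<bullet> w)) (at (y + 0 *\<^sub>R (z-y)))" using d by simp
  ultimately have "(\<phi> has_derivative (\<lambda>\<theta>. D \<bullet> (\<theta> *\<^sub>R (z-y)))) (at 0)"
    unfolding \<phi>_def by (rule has_derivative_compose)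
  then have "(\<phi> has_field_derivative (D \<bullet> (z-y))) (at 0)"
    unfolding has_field_derivative_def by (simp add: mult.commute[of _ "D \<bullet> (z-y)"])
  then have "(\<phi> has_field_derivative (D \<bullet> (z-y))) (at 0 within {0<..})"
    by (rule has_field_derivative_at_within)
  then have L: "((\<lambda>\<theta>. (\<phi> \<theta> - \<phi> 0) / (\<theta> - 0)) \<longlongrightarrow> D \<bullet> (z-y)) (at_right 0)"
    by (simp add: has_field_derivative_iff)
  have R: "((\<lambda>\<theta>. F z - F y - \<mu>/2*(1-\<theta>)*(norm(z-y))\<^sup>2) \<longlongrightarrow> F z - F y - \<mu>/2*(1-0)*(norm(z-y))\<^sup>2) (at_right 0)"
    by (intro tendsto_intros)
  have ev: "eventually (\<lambda>\<theta>. (\<phi> \<theta> - \<phi> 0) / (\<theta> - 0) \<le> F z - F y - \<mu>/2*(1-\<theta>)*(norm(z-y))\<^sup>2) (at_right (0::real))"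
    unfolding eventually_at_right_field
  proof (intro exI[of _ 1] conjI allI impI)
    fix \<theta> :: real assume "0 < \<theta>" "\<theta> < 1"
    have e: "\<theta> *\<^sub>R z + (1-\<theta>) *\<^sub>R y = y + \<theta> *\<^sub>R (z - y)"
      by (simp add: algebra_simps)
    have "\<phi> \<theta> \<le> \<theta> * F z + (1-\<theta>) * F y - \<mu>/2*\<theta>*(1-\<theta>)*(norm(z-y))\<^sup>2"
      using sc[of \<theta> z y] \<open>0<\<theta>\<close> \<open>\<theta><1\<close> unfolding \<phi>_def e by simp
    then have "\<phi> \<theta> - \<phi> 0 \<le> \<theta> * (F z - F y - \<mu>/2*(1-\<theta>)*(norm(z-y))\<^sup>2)"
      unfolding \<phi>_def by (simp add: algebra_simps)
    then show "(\<phi> \<theta> - \<phi> 0) / (\<theta> - 0) \<le> F z - F y - \<mu>/2*(1-\<theta>)*(norm(z-y))\<^sup>2"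
      using \<open>0<\<theta>\<close> by (simp add: divide_le_eq mult.commute)
  qed simp
  have "D \<bullet> (z-y) \<le> F z - F y - \<mu>/2*(1-0)*(norm(z-y))\<^sup>2"
    by (rule tendsto_le[OF _ R L ev]) simp
  then show ?thesis by simp
qed

lemma convex_sc0:
  assumes "convex_on UNIV F" "0 \<le> \<theta>" "\<theta> \<le> 1"
  shows "F (\<theta> *\<^sub>R a + (1-\<theta>) *\<^sub>R b) \<le> \<theta> * F a + (1-\<theta>) * F b - 0/2*\<theta>*(1-\<theta>)*(norm(a-b))\<^sup>2"
  using assms unfolding convex_on_def by simp

lemma sc_D:
  assumes "strongly_convex_on UNIV \<mu> F" "0 \<le> \<theta>" "\<theta> \<le> 1"
  shows "F (\<theta> *\<^sub>R a + (1-\<theta>) *\<^sub>R b) \<le> \<theta> * F a + (1-\<theta>) * F b - \<mu>/2*\<theta>*(1-\<theta>)*(norm(a-b))\<^sup>2"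
  using assms unfolding strongly_convex_on_def by simp


lemma blin_rep:
  fixes L :: "((real^'n) \<times> (real^'m)) \<Rightarrow>\<^sub>L real"
  shows "blinfun_apply L (0, w) = (\<chi> j. blinfun_apply L (0, axis j 1)) \<bullet> w"
proof -
  have W: "(0::real^'n, w) = (\<Sum>j\<in>UNIV. (w$j) *\<^sub>R (0, axis j 1))"
  proof -
    have "w = (\<Sum>j\<in>UNIV. (w$j) *\<^sub>R axis j (1::real))"
      using basis_expansion[of w] by (simp add: scalar_mult_eq_scaleR)
    then show ?thesis
      by (intro prod_eqI) (simp_all add: fst_sum snd_sum)
  qed
  have "blinfun_apply L (0, w) = (\<Sum>j\<in>UNIV. (w$j) * blinfun_apply L (0, axis j 1))"
  proof -
    have e: "blinfun_apply L (0, c *\<^sub>R a) = c * blinfun_apply L (0, a)" for c a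
    proof -
      have "(0::real^'n, c *\<^sub>R a) = c *\<^sub>R (0, a)" by simp
      then show ?thesis by (metis blinfun.scaleR_right real_scaleR_def)
    qed
    have "blinfun_apply L (0, w) = blinfun_apply L (\<Sum>j\<in>UNIV. (w$j) *\<^sub>R (0::real^'n, axis j 1))"
      using W by (rule arg_cong)
    also have "\<dots> = (\<Sum>j\<in>UNIV. blinfun_apply L ((w$j) *\<^sub>R (0, axis j 1)))"
      by (rule blinfun.sum_right)
    also have "\<dots> = (\<Sum>j\<in>UNIV. (w$j) * blinfun_apply L (0, axis j 1))"
      by (simp only: blinfun.scaleR_right real_scaleR_def)
    finally show ?thesis .
  qed
  also have "\<dots> = (\<chi> j. blinfun_apply L (0, axis j 1)) \<bullet> w"
    by (simp add: inner_vec_def mult.commute)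
  finally show ?thesis .
qed

lemma C2_partial:
  fixes F :: "real^'n \<Rightarrow> real^'m \<Rightarrow> real"
  assumes "C2_fun (case_prod F)"
  shows "\<exists>Gy. (\<forall>x y. ((\<lambda>v. F x v) has_derivative (\<lambda>w. Gy x y \<bullet> w)) (at y))
            \<and> continuous_on UNIV (case_prod Gy) \<and> continuous_on UNIV (case_prod F)"
proof -
  obtain F' F'' where d1: "\<And>z. (case_prod F has_derivative blinfun_apply (F' z)) (at z)"
    and d2: "\<And>z. (F' has_derivative blinfun_apply (F'' z)) (at z)"
    using assms unfolding C2_fun_def by blast
  have cF': "continuous_on UNIV F'"
    by (rule has_derivative_continuous_on[of UNIV F' "\<lambda>z. blinfun_apply (F'' z)"]) (simp add: d2)
  have cF: "continuous_on UNIV (case_prod F)"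
    by (rule has_derivative_continuous_on[of UNIV _ "\<lambda>z. blinfun_apply (F' z)"]) (simp add: d1)
  define Gy where "Gy x y = (\<chi> j. blinfun_apply (F' (x,y)) (0, axis j 1))" for x y
  have "((\<lambda>v. F x v) has_derivative (\<lambda>w. Gy x y \<bullet> w)) (at y)" for x y
  proof -
    have p: "((\<lambda>v. (x,v)) has_derivative (\<lambda>w. (0,w))) (at y)"
      by (auto intro!: derivative_eq_intros)
    have "((\<lambda>v. case_prod F (x,v)) has_derivative (\<lambda>w. blinfun_apply (F' (x,y)) (0,w))) (at y)"
      by (rule has_derivative_compose[OF p d1])
    moreover have "(\<lambda>w. blinfun_apply (F' (x,y)) (0,w)) = (\<lambda>w. Gy x y \<bullet> w)"
      unfolding Gy_def by (rule ext, rule blin_rep)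
    ultimately show ?thesis by simp
  qed
  moreover have "continuous_on UNIV (case_prod Gy)"
  proof -
    have "case_prod Gy = (\<lambda>z. \<chi> j. blinfun_apply (F' z) (0, axis j 1))"
      by (auto simp: Gy_def)
    moreover have "continuous_on UNIV (\<lambda>z. \<chi> j. blinfun_apply (F' z) (0, axis j 1))"
      by (intro continuous_intros cF')
    ultimately show ?thesis by simp
  qed
  ultimately show ?thesis using cF by blast
qed

lemma grad_y_eq:
  assumes "\<And>x y. ((\<lambda>v. F x v) has_derivative (\<lambda>w. Gy x y \<bullet> w)) (at y)"
  shows "grad_y F x y = Gy x y"
  unfolding grad_y_def
proof (rule the_equality)
  show "((\<lambda>v. F x v) has_derivative (\<lambda>w. Gy x y \<bullet> w)) (at y)" by (rule assms)
next
  fix D assume "((\<lambda>v. F x v) has_derivative (\<lambda>w. D \<bullet> w)) (at y)"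
  from has_derivative_unique[OF this assms]
  have "(\<lambda>w. D \<bullet> w) = (\<lambda>w. Gy x y \<bullet> w)" .
  then have "D \<bullet> (D - Gy x y) = Gy x y \<bullet> (D - Gy x y)" by metis
  then have "(D - Gy x y) \<bullet> (D - Gy x y) = 0" by (simp add: inner_diff_left)
  then show "D = Gy x y" by simp
qed


lemma cont_slice:
  assumes "continuous_on UNIV (case_prod F)"
  shows "continuous_on S (\<lambda>y. F x y)"
proof -
  have "continuous_on S (\<lambda>y. case_prod F (x,y))"
    by (rule continuous_on_compose2[OF assms]) (auto intro!: continuous_intros)
  then show ?thesis by simp
qed

lemma seq_cont:
  fixes F :: "'a::metric_space \<Rightarrow> 'b::metric_space \<Rightarrow> 'c::topological_space"
  assumes "continuous_on UNIV (case_prod F)" "(a \<longlongrightarrow> a0) Fl" "(b \<longlongrightarrow> b0) Fl"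
  shows "((\<lambda>n. F (a n) (b n)) \<longlongrightarrow> F a0 b0) Fl"
proof -
  have "isCont (case_prod F) (a0,b0)"
    using assms(1) continuous_on_eq_continuous_at[of UNIV] by auto
  from isCont_tendsto_compose[OF this tendsto_Pair[OF assms(2,3)]] show ?thesis by simp
qed

locale BL =
  fixes g :: "real^'n \<Rightarrow> real^'m \<Rightarrow> real" and h :: "nat \<Rightarrow> real^'n \<Rightarrow> real^'m \<Rightarrow> real"
    and k :: nat and X :: "(real^'n) set" and mu :: real
    and Gy :: "real^'n \<Rightarrow> real^'m \<Rightarrow> real^'m" and Hy :: "nat \<Rightarrow> real^'n \<Rightarrow> real^'m \<Rightarrow> real^'m"
  assumes cg: "continuous_on UNIV (case_prod g)"
    and ch: "\<And>i. i<k \<Longrightarrow> continuous_on UNIV (case_prod (h i))"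
    and dg: "\<And>x y. ((\<lambda>v. g x v) has_derivative (\<lambda>w. Gy x y \<bullet> w)) (at y)"
    and cGy: "continuous_on UNIV (case_prod Gy)"
    and dh: "\<And>i x y. i<k \<Longrightarrow> ((\<lambda>v. h i x v) has_derivative (\<lambda>w. Hy i x y \<bullet> w)) (at y)"
    and cHy: "\<And>i. i<k \<Longrightarrow> continuous_on UNIV (case_prod (Hy i))"
    and cX: "compact X"
    and slater: "\<And>x. x\<in>X \<Longrightarrow> \<exists>y. \<forall>i<k. h i x y < 0"
    and licq: "\<And>x c. x\<in>X \<Longrightarrow> (\<Sum>i\<in>{i. i < k \<and> h i x (ystar g h k x) = 0}. c i *\<^sub>R Hy i x (ystar g h k x)) = 0
                 \<Longrightarrow> \<forall>i\<in>{i. i < k \<and> h i x (ystar g h k x) = 0}. c i = 0"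
    and mu: "mu > 0"
    and sc: "\<And>x. x\<in>X \<Longrightarrow> strongly_convex_on UNIV mu (g x)"
    and cvx: "\<And>x i. x\<in>X \<Longrightarrow> i<k \<Longrightarrow> convex_on UNIV (h i x)"
begin

lemma cgy: "continuous_on S (\<lambda>y. g x y)" by (rule cont_slice[OF cg])
lemma chy: "i<k \<Longrightarrow> continuous_on S (\<lambda>y. h i x y)" by (rule cont_slice[OF ch])

lemma tang_g: "x\<in>X \<Longrightarrow> g x z \<ge> g x y + Gy x y \<bullet> (z - y) + mu/2 * (norm (z-y))\<^sup>2"
  by (rule tangent_ineq[of mu "g x"]) (use mu sc_D[OF sc] dg in auto)

lemma tang_h: "x\<in>X \<Longrightarrow> i<k \<Longrightarrow> h i x z \<ge> h i x y + Hy i x y \<bullet> (z - y)"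
  using tangent_ineq[of 0 "h i x" "Hy i x y" y z] convex_sc0[OF cvx] dh by auto

definition Sx where "Sx x = {y. \<forall>i<k. h i x y < 0}"

lemma open_Sx: "open (Sx x)"
proof -
  have "Sx x = (\<Inter>i\<in>{..<k}. {y. h i x y < 0})" by (auto simp: Sx_def)
  moreover have "open {y. h i x y < 0}" if "i<k" for i
    by (rule open_Collect_less) (use chy that in \<open>auto intro: continuous_intros\<close>)
  ultimately show ?thesis by auto
qed

lemma B_sc:
  assumes x: "x\<in>X" and t: "t>0" and a: "a\<in>Sx x" and b: "b \<in> Sx x" and th: "0\<le>\<theta>" "\<theta>\<le>1"
  shows "\<theta> *\<^sub>R a + (1-\<theta>) *\<^sub>R b \<in> Sx x \<and>
    gbar g h k t x (\<theta> *\<^sub>R a + (1-\<theta>) *\<^sub>R b) \<le> \<theta> * gbar g h k t x a + (1-\<theta>) * gbar g h k t x b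
       - mu/2*\<theta>*(1-\<theta>)*(norm(a-b))\<^sup>2"
proof -
  let ?c = "\<theta> *\<^sub>R a + (1-\<theta>) *\<^sub>R b"
  have hc: "h i x ?c \<le> \<theta> * h i x a + (1-\<theta>) * h i x b" if "i<k" for i
    using convex_sc0[OF cvx[OF x that] th, of a b] by simp
  have neg: "h i x ?c < 0" if "i<k" for i
  proof -
    have "\<theta> * h i x a \<le> 0" "(1-\<theta>) * h i x b \<le> 0"
      using a b that th by (auto simp: Sx_def mult_nonneg_nonpos)
    moreover have "\<theta> * h i x a < 0 \<or> (1-\<theta>) * h i x b < 0"
      using a b that th by (cases "\<theta> = 0") (auto simp: Sx_def mult_pos_neg)
    ultimately show ?thesis using hc[OF that] by linarith
  qed
  have lnc: "ln (- h i x ?c) \<ge> \<theta> * ln (- h i x a) + (1-\<theta>) * ln (- h i x b)" if "i<k" for i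
  proof -
    have pa: "- h i x a > 0" "- h i x b > 0" using a b that by (auto simp: Sx_def)
    have "\<theta> * ln (- h i x a) + (1-\<theta>) * ln (- h i x b) \<le> ln (\<theta> * (- h i x a) + (1-\<theta>) * (- h i x b))"
    proof -
      have H: "\<forall>x::real\<in>{0<..}. \<forall>y::real\<in>{0<..}. \<forall>u\<ge>0. \<forall>v\<ge>0. u + v = 1 \<longrightarrow> u * ln x + v * ln y \<le> ln (u * x + v * y)"
        using ln_concave unfolding concave_on_iff by simp
      show ?thesis using H[rule_format, of "- h i x a" "- h i x b" \<theta> "1-\<theta>"] pa th by simp
    qed
    also have "\<dots> \<le> ln (- h i x ?c)"
    proof (rule ln_mono)
      have "\<theta> * h i x a \<le> 0" "(1-\<theta>) * h i x b \<le> 0"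
        using a b that th by (auto simp: Sx_def mult_nonneg_nonpos)
      moreover have "\<theta> * h i x a < 0 \<or> (1-\<theta>) * h i x b < 0"
        using a b that th by (cases "\<theta> = 0") (auto simp: Sx_def mult_pos_neg)
      ultimately show "0 < \<theta> * (- h i x a) + (1-\<theta>) * (- h i x b)" by linarith
    qed (use hc[OF that] in auto)
    finally show ?thesis .
  qed
  have "(\<Sum>i<k. ln (- h i x ?c)) \<ge> \<theta> * (\<Sum>i<k. ln (- h i x a)) + (1-\<theta>) * (\<Sum>i<k. ln (- h i x b))"
    using lnc by (simp add: sum_distrib_left sum.distrib[symmetric]) (rule sum_mono, simp)
  then have "t * (\<Sum>i<k. ln (- h i x ?c)) \<ge> t * (\<theta> * (\<Sum>i<k. ln (- h i x a)) + (1-\<theta>) * (\<Sum>i<k. ln (- h i x b)))"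
    using t by (simp add: mult_left_mono)
  moreover have "g x ?c \<le> \<theta> * g x a + (1-\<theta>) * g x b - mu/2*\<theta>*(1-\<theta>)*(norm(a-b))\<^sup>2"
    using sc_D[OF sc[OF x] th] .
  ultimately show ?thesis using neg unfolding gbar_def Sx_def by (auto simp: algebra_simps)
qed

end


context BL begin

definition "phi x y = \<bar>g x y\<bar> + (\<Sum>i<k. \<bar>h i x y\<bar>)"

lemma phi_cont: "continuous_on S (phi x)"
  unfolding phi_def by (auto intro!: continuous_intros cgy chy)

lemma phi_nonneg: "0 \<le> phi x y" unfolding phi_def by (auto intro: sum_nonneg)
lemma phi_g: "\<bar>g x y\<bar> \<le> phi x y" unfolding phi_def by (auto intro: sum_nonneg)
lemma phi_h: "i<k \<Longrightarrow> \<bar>h i x y\<bar> \<le> phi x y"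
proof -
  assume "i<k"
  then have "\<bar>h i x y\<bar> \<le> (\<Sum>i<k. \<bar>h i x y\<bar>)"
    by (intro member_le_sum) auto
  then show ?thesis unfolding phi_def by simp
qed

lemma phi_bound: "\<exists>M. \<forall>y\<in>cball y0 r. phi x y \<le> M"
proof -
  have "bounded (phi x ` cball y0 r)"
    by (intro compact_imp_bounded compact_continuous_image phi_cont compact_cball)
  then obtain M where "\<forall>z\<in>phi x ` cball y0 r. norm z \<le> M" by (auto simp: bounded_iff)
  then show ?thesis by (intro exI[of _ M]) auto
qed

lemma LB:
  fixes M :: real
  assumes t: "t > 0" and y: "y \<in> Sx x" and M: "phi x y \<le> M"
  shows "gbar g h k t x y \<ge> -M - t*k*M"
proof -
  have "ln (- h i x y) \<le> M" if "i<k" for i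
  proof -
    have "- h i x y > 0" using y that by (auto simp: Sx_def)
    then have "ln (- h i x y) \<le> - h i x y - 1" by (rule ln_le_minus_one)
    also have "\<dots> \<le> M" using phi_h[OF that, of x y] M by linarith
    finally show ?thesis .
  qed
  then have "(\<Sum>i<k. ln (- h i x y)) \<le> (\<Sum>i<k. M)" by (intro sum_mono) auto
  then have "t * (\<Sum>i<k. ln (- h i x y)) \<le> t * (k * M)" using t by (simp add: mult_left_mono)
  moreover have "g x y \<ge> -M" using phi_g[of x y] M by linarith
  ultimately show ?thesis unfolding gbar_def by (simp add: algebra_simps)
qed

lemma LBd:
  fixes M \<delta> :: real
  assumes t: "t > 0" and y: "y \<in> Sx x" and M: "phi x y \<le> M" and j: "j<k"
    and d: "- h j x y < \<delta>"
  shows "gbar g h k t x y \<ge> -M - t*(ln \<delta> + k*M)"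
proof -
  have M0: "M \<ge> 0" using phi_nonneg[of x y] M by linarith
  have pos: "- h i x y > 0" if "i<k" for i using y that by (auto simp: Sx_def)
  have lnM: "ln (- h i x y) \<le> M" if "i<k" for i
  proof -
    have "ln (- h i x y) \<le> - h i x y - 1" by (rule ln_le_minus_one[OF pos[OF that]])
    also have "\<dots> \<le> M" using phi_h[OF that, of x y] M by linarith
    finally show ?thesis .
  qed
  have "(\<Sum>i<k. ln (- h i x y)) = ln (- h j x y) + (\<Sum>i\<in>{..<k}-{j}. ln (- h i x y))"
    using j by (simp add: sum.remove)
  also have "\<dots> \<le> ln \<delta> + (\<Sum>i\<in>{..<k}-{j}. M)"
  proof (rule add_mono)
    show "ln (- h j x y) \<le> ln \<delta>" using d pos[OF j] by simp
    show "(\<Sum>i\<in>{..<k}-{j}. ln (- h i x y)) \<le> (\<Sum>i\<in>{..<k}-{j}. M)"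
      using lnM by (intro sum_mono) auto
  qed
  also have "(\<Sum>i\<in>{..<k}-{j}. M) \<le> k * M"
    using M0 j by (simp add: card_Diff_singleton mult_right_mono)
  finally have "(\<Sum>i<k. ln (- h i x y)) \<le> ln \<delta> + k * M" by simp
  then have "t * (\<Sum>i<k. ln (- h i x y)) \<le> t * (ln \<delta> + k * M)" using t by (simp add: mult_left_mono)
  moreover have "g x y \<ge> -M" using phi_g[of x y] M by linarith
  ultimately show ?thesis unfolding gbar_def by (simp add: algebra_simps)
qed

end


context BL begin

lemma exists_min:
  assumes x: "x\<in>X" and t: "t>0"
  shows "\<exists>y1\<in>Sx x. \<forall>y\<in>Sx x. gbar g h k t x y1 \<le> gbar g h k t x y"
proof -
  let ?B = "gbar g h k t x"
  obtain y0 where y0: "y0 \<in> Sx x" using slater[OF x] by (auto simp: Sx_def)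
  define B0 where "B0 = ?B y0"
  obtain M1 where M1: "\<forall>y\<in>cball y0 1. phi x y \<le> M1" using phi_bound by blast
  define LB1 where "LB1 = -M1 - t*k*M1"
  have LB1: "LB1 \<le> ?B y" if "y \<in> Sx x" "norm (y - y0) \<le> 1" for y
    unfolding LB1_def by (rule LB[OF t that(1)]) (use M1 that in \<open>auto simp: dist_norm norm_minus_commute\<close>)
  have LB1_le: "LB1 \<le> B0" unfolding B0_def by (rule LB1[OF y0]) simp
  have far: "?B y \<ge> norm(y-y0)*LB1 - (norm(y-y0)-1)*B0 + mu/2*(norm(y-y0)-1)*norm(y-y0)"
    if y: "y \<in> Sx x" and r1: "norm (y - y0) \<ge> 1" for y
  proof -
    define r where "r = norm (y - y0)"
    have r0: "r > 0" using r1 unfolding r_def by linarith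
    define \<theta> where "\<theta> = 1 / r"
    have th: "0 \<le> \<theta>" "\<theta> \<le> 1" using r1 r0 unfolding \<theta>_def r_def by auto
    define z where "z = \<theta> *\<^sub>R y + (1-\<theta>) *\<^sub>R y0"
    from B_sc[OF x t y y0 th] have zS: "z \<in> Sx x"
      and Bz: "?B z \<le> \<theta> * ?B y + (1-\<theta>) * B0 - mu/2*\<theta>*(1-\<theta>)*r\<^sup>2"
      unfolding z_def B0_def r_def by auto
    have "z - y0 = \<theta> *\<^sub>R (y - y0)" unfolding z_def by (simp add: algebra_simps)
    then have "norm (z - y0) = 1" using r0 unfolding \<theta>_def r_def by simp
    then have "LB1 \<le> ?B z" using LB1[OF zS] by simp
    with Bz have "LB1 \<le> \<theta> * ?B y + (1-\<theta>) * B0 - mu/2*\<theta>*(1-\<theta>)*r\<^sup>2" by linarith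
    then have "r * LB1 \<le> r * (\<theta> * ?B y + (1-\<theta>) * B0 - mu/2*\<theta>*(1-\<theta>)*r\<^sup>2)"
      using r0 by (simp add: mult_left_mono)
    also have "\<dots> = ?B y + (r-1) * B0 - mu/2*(r-1)*r"
      using r0 unfolding \<theta>_def by (simp add: field_simps power2_eq_square)
    finally show ?thesis unfolding r_def by (simp add: algebra_simps)
  qed
  define R where "R = 2 + 2*(B0 - LB1)/mu"
  have R2: "R \<ge> 2" unfolding R_def using LB1_le mu by simp
  have farB: "?B y > B0" if y: "y \<in> Sx x" and rR: "norm (y - y0) > R" for y
  proof -
    define r where "r = norm (y - y0)"
    have r1: "r \<ge> 1" using rR R2 unfolding r_def by simp
    have "mu/2*(r-1) > mu/2*(R-1)" using rR mu unfolding r_def by simp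
    moreover have "mu/2*(R-1) = mu/2 + (B0 - LB1)" unfolding R_def using mu by (simp add: field_simps)
    ultimately have pos: "mu/2*(r-1) - (B0 - LB1) > 0" using mu by linarith
    then have "r * (mu/2*(r-1) - (B0 - LB1)) > 0" using r1 by simp
    moreover have "?B y \<ge> r*LB1 - (r-1)*B0 + mu/2*(r-1)*r"
      using far[OF y] r1 unfolding r_def by simp
    ultimately show ?thesis by (simp add: algebra_simps)
  qed
  obtain M2 where M2: "\<forall>y\<in>cball y0 R. phi x y \<le> M2" using phi_bound by blast
  have M20: "M2 \<ge> 0"
  proof -
    have "y0 \<in> cball y0 R" using R2 by simp
    then have "phi x y0 \<le> M2" using M2 by blast
    then show ?thesis using phi_nonneg[of x y0] by linarith
  qed
  define \<delta> where "\<delta> = exp (((-M2 - B0)/t - k*M2) - 1)"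
  have d0: "\<delta> > 0" unfolding \<delta>_def by simp
  have nearB: "?B y > B0" if y: "y \<in> Sx x" "norm (y - y0) \<le> R" and j: "j<k" and hj: "- h j x y < \<delta>" for y j
  proof -
    have "?B y \<ge> -M2 - t*(ln \<delta> + k*M2)"
      by (rule LBd[OF t y(1) _ j hj]) (use M2 y in \<open>auto simp: dist_norm norm_minus_commute\<close>)
    also have "-M2 - t*(ln \<delta> + k*M2) = B0 + t"
      unfolding \<delta>_def using t by (simp add: field_simps)
    finally show ?thesis using t by simp
  qed
  define L where "L = cball y0 R \<inter> (\<Inter>i\<in>{..<k}. {y. \<delta> \<le> - h i x y})"
  have y0L: "y0 \<in> L"
  proof -
    have "\<delta> \<le> - h i x y0" if "i<k" for i
    proof (rule ccontr)
      assume "\<not> \<delta> \<le> - h i x y0"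
      then have "?B y0 > B0" using nearB[OF y0 _ that] R2 by simp
      then show False unfolding B0_def by simp
    qed
    then show ?thesis unfolding L_def using R2 by auto
  qed
  have LS: "L \<subseteq> Sx x"
    unfolding L_def Sx_def using d0 by force
  have cL: "compact L"
    unfolding L_def
  proof (intro compact_Int_closed compact_cball closed_INT ballI)
    fix i assume "i \<in> {..<k}"
    then show "closed {y. \<delta> \<le> - h i x y}"
      by (intro closed_Collect_le continuous_intros chy) auto
  qed
  have contB: "continuous_on L ?B"
  proof -
    have "continuous_on L (\<lambda>y. g x y - t * (\<Sum>i<k. ln (- h i x y)))"
    proof (rule continuous_on_diff[OF cgy continuous_on_mult[OF continuous_on_const continuous_on_sum]])
      fix i assume i: "i \<in> {..<k}"
      show "continuous_on L (\<lambda>y. ln (- h i x y))"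
      proof (rule continuous_on_ln)
        show "continuous_on L (\<lambda>y. - h i x y)" using i by (intro continuous_intros chy) auto
        show "\<forall>y\<in>L. - h i x y \<noteq> 0" using LS i unfolding Sx_def by fastforce
      qed
    qed
    then show ?thesis unfolding gbar_def .
  qed
  obtain y1 where y1: "y1 \<in> L" "\<forall>y\<in>L. ?B y1 \<le> ?B y"
    using continuous_attains_inf[OF cL _ contB] y0L by blast
  have "?B y1 \<le> ?B y" if y: "y \<in> Sx x" for y
  proof (cases "y \<in> L")
    case True then show ?thesis using y1 by blast
  next
    case False
    have "?B y1 \<le> B0" using y1 y0L unfolding B0_def by blast
    moreover have "?B y > B0"
    proof (cases "norm (y - y0) > R")
      case True then show ?thesis using farB[OF y] by blast
    next
      case F2: False
      then have "y \<in> cball y0 R" by (simp add: dist_norm norm_minus_commute)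
      with False obtain j where "j<k" "- h j x y < \<delta>" unfolding L_def by auto
      then show ?thesis using nearB[OF y] F2 by simp
    qed
    ultimately show ?thesis by simp
  qed
  then show ?thesis using y1 LS by blast
qed

end


context BL begin

lemma min_unique:
  assumes x: "x\<in>X" and t: "t>0" and a: "a \<in> Sx x" and b: "b \<in> Sx x"
    and ma: "\<forall>y\<in>Sx x. gbar g h k t x a \<le> gbar g h k t x y"
    and mb: "\<forall>y\<in>Sx x. gbar g h k t x b \<le> gbar g h k t x y"
  shows "a = b"
proof -
  let ?B = "gbar g h k t x"
  define m where "m = (1/2) *\<^sub>R a + (1 - 1/2) *\<^sub>R b"
  define c where "c = mu/2*(1/2)*(1-1/2)*(norm(a-b))\<^sup>2"
  from B_sc[OF x t a b, of "1/2"] have mS: "m \<in> Sx x"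
    and Bm: "?B m \<le> 1/2 * ?B a + (1-1/2) * ?B b - c"
    unfolding m_def c_def by auto
  have Bm': "?B m \<le> 1/2 * ?B a + 1/2 * ?B b - c" using Bm by simp
  have "?B a \<le> ?B m" using ma mS by blast
  moreover have "?B a \<le> ?B b" "?B b \<le> ?B a" using ma mb a b by auto
  ultimately have "c \<le> 0" using Bm' by linarith
  then have "mu/2*(1/2)*(1-1/2)*(norm(a-b))\<^sup>2 \<le> 0" unfolding c_def .
  then have "(norm(a-b))\<^sup>2 \<le> 0" using mu by (simp add: mult_le_0_iff)
  then show ?thesis by simp
qed

lemma ybar_prop:
  assumes x: "x\<in>X" and t: "t>0"
  shows "ybar g h k t x \<in> Sx x \<and> (\<forall>y\<in>Sx x. gbar g h k t x (ybar g h k t x) \<le> gbar g h k t x y)"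
proof -
  obtain y1 where y1: "y1 \<in> Sx x" "\<forall>y\<in>Sx x. gbar g h k t x y1 \<le> gbar g h k t x y"
    using exists_min[OF x t] by blast
  have "ybar g h k t x = y1"
    unfolding ybar_def
  proof (rule the_equality)
    show "(\<forall>i<k. h i x y1 < 0) \<and> (\<forall>z. (\<forall>i<k. h i x z < 0) \<longrightarrow> gbar g h k t x y1 \<le> gbar g h k t x z)"
      using y1 by (auto simp: Sx_def)
  next
    fix y assume "(\<forall>i<k. h i x y < 0) \<and> (\<forall>z. (\<forall>i<k. h i x z < 0) \<longrightarrow> gbar g h k t x y \<le> gbar g h k t x z)"
    then have "y \<in> Sx x" "\<forall>z\<in>Sx x. gbar g h k t x y \<le> gbar g h k t x z" by (auto simp: Sx_def)
    then show "y = y1" using min_unique[OF x t _ y1(1) _ y1(2)] by blast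
  qed
  then show ?thesis using y1 by simp
qed

definition "yb t x = ybar g h k t x"
definition "mlt t x i = t / (- h i x (yb t x))"

lemma yb_S: "x\<in>X \<Longrightarrow> t>0 \<Longrightarrow> i<k \<Longrightarrow> h i x (yb t x) < 0"
  using ybar_prop unfolding yb_def Sx_def by blast

lemma mlt_pos: "x\<in>X \<Longrightarrow> t>0 \<Longrightarrow> i<k \<Longrightarrow> mlt t x i > 0"
proof -
  assume a: "x\<in>X" "t>0" "i<k"
  have "- h i x (yb t x) > 0" using yb_S[OF a] by simp
  then show ?thesis unfolding mlt_def using a(2) by (rule divide_pos_pos[rotated])
qed

lemma stat:
  assumes x: "x\<in>X" and t: "t>0"
  shows "Gy x (yb t x) + (\<Sum>i<k. mlt t x i *\<^sub>R Hy i x (yb t x)) = 0"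
proof -
  define y where "y = yb t x"
  have yS: "y \<in> Sx x" and ymin: "\<forall>z\<in>Sx x. gbar g h k t x y \<le> gbar g h k t x z"
    using ybar_prop[OF x t] unfolding y_def yb_def by auto
  have hneg: "h i x y < 0" if "i<k" for i using yS that by (auto simp: Sx_def)
  define V where "V = Gy x y + (\<Sum>i<k. mlt t x i *\<^sub>R Hy i x y)"
  have dl: "((\<lambda>v. ln (- h i x v)) has_derivative (\<lambda>w. (- (Hy i x y \<bullet> w)) * inverse (- h i x y))) (at y)"
    if "i<k" for i
  proof -
    have "((\<lambda>v. - h i x v) has_derivative (\<lambda>w. - (Hy i x y \<bullet> w))) (at y)"
      using dh[OF that] by (intro derivative_intros)
    from has_derivative_ln[OF _ this] show ?thesis using hneg[OF that] by simp
  qed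
  have dB: "((\<lambda>v. gbar g h k t x v) has_derivative
      (\<lambda>w. Gy x y \<bullet> w - t * (\<Sum>i<k. (- (Hy i x y \<bullet> w)) * inverse (- h i x y)))) (at y)"
    unfolding gbar_def
    by (intro has_derivative_diff dg has_derivative_mult_right has_derivative_sum dl) auto
  have "(\<lambda>w. Gy x y \<bullet> w - t * (\<Sum>i<k. (- (Hy i x y \<bullet> w)) * inverse (- h i x y))) = (\<lambda>v. 0)"
    by (rule differential_zero_maxmin[OF yS open_Sx dB]) (use ymin in blast)
  then have "Gy x y \<bullet> V - t * (\<Sum>i<k. (- (Hy i x y \<bullet> V)) * inverse (- h i x y)) = 0"
    by metis
  moreover have "Gy x y \<bullet> V - t * (\<Sum>i<k. (- (Hy i x y \<bullet> V)) * inverse (- h i x y)) = V \<bullet> V"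
  proof -
    have "V \<bullet> V = Gy x y \<bullet> V + (\<Sum>i<k. mlt t x i * (Hy i x y \<bullet> V))"
      unfolding V_def by (simp add: inner_add_left inner_sum_left)
    also have "(\<Sum>i<k. mlt t x i * (Hy i x y \<bullet> V)) = - (t * (\<Sum>i<k. (- (Hy i x y \<bullet> V)) * inverse (- h i x y)))"
      unfolding mlt_def y_def[symmetric]
      by (simp add: sum_distrib_left sum_negf[symmetric] field_simps)
    finally show ?thesis by simp
  qed
  ultimately have "V = 0" by simp
  then show ?thesis unfolding V_def y_def .
qed

lemma gap:
  fixes t :: real
  assumes x: "x\<in>X" and t: "t>0" and z: "\<forall>i<k. h i x z \<le> 0"
  shows "mu/2 * (norm (z - yb t x))\<^sup>2 \<le> g x z - g x (yb t x) + real k * t"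
proof -
  define y where "y = yb t x"
  have hneg: "h i x y < 0" if "i<k" for i using yb_S[OF x t that] unfolding y_def .
  have G: "Gy x y = - (\<Sum>i<k. mlt t x i *\<^sub>R Hy i x y)"
    using stat[OF x t] unfolding y_def by (simp add: eq_neg_iff_add_eq_0)
  have each: "mlt t x i * (Hy i x y \<bullet> (z - y)) \<le> t" if i: "i<k" for i
  proof -
    have "Hy i x y \<bullet> (z - y) \<le> h i x z - h i x y" using tang_h[OF x i, of y z] by simp
    then have "mlt t x i * (Hy i x y \<bullet> (z - y)) \<le> mlt t x i * (h i x z - h i x y)"
      using mlt_pos[OF x t i] by (simp add: mult_left_mono)
    also have "\<dots> \<le> mlt t x i * (- h i x y)"
      using mlt_pos[OF x t i] z i by (intro mult_left_mono) auto
    also have "\<dots> = t" unfolding mlt_def y_def[symmetric] using hneg[OF i] by simp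
    finally show ?thesis .
  qed
  have "(\<Sum>i<k. mlt t x i * (Hy i x y \<bullet> (z - y))) \<le> (\<Sum>i<k. t)" by (rule sum_mono) (use each in auto)
  then have "Gy x y \<bullet> (z - y) \<ge> - (k * t)"
    unfolding G by (simp add: inner_sum_left)
  moreover have "g x z \<ge> g x y + Gy x y \<bullet> (z - y) + mu/2 * (norm (z-y))\<^sup>2" by (rule tang_g[OF x])
  ultimately show ?thesis unfolding y_def by linarith
qed

end


lemma BW_fin:
  fixes u :: "nat \<Rightarrow> nat \<Rightarrow> real"
  assumes "\<And>n i. i<k \<Longrightarrow> \<bar>u n i\<bar> \<le> B"
  shows "\<exists>r l. strict_mono r \<and> (\<forall>i<k. (\<lambda>n. u (r n) i) \<longlonglongrightarrow> l i)"
  using assms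
proof (induction k)
  case 0
  show ?case by (intro exI[of _ id]) (auto simp: strict_mono_def)
next
  case (Suc k)
  from Suc.prems have "\<And>n i. i<k \<Longrightarrow> \<bar>u n i\<bar> \<le> B" by auto
  from Suc.IH[OF this] obtain r l where r: "strict_mono r" and l: "\<forall>i<k. (\<lambda>n. u (r n) i) \<longlonglongrightarrow> l i"
    by blast
  have "bounded (range (\<lambda>n. u (r n) k))"
    unfolding bounded_iff using Suc.prems[of k] by auto
  from bounded_imp_convergent_subsequence[OF this] obtain l2 r2
    where r2: "strict_mono r2" and l2: "((\<lambda>n. u (r n) k) \<circ> r2) \<longlonglongrightarrow> l2" by blast
  show ?case
  proof (intro exI[of _ "r \<circ> r2"] exI[of _ "l(k := l2)"] conjI allI impI)
    show "strict_mono (r \<circ> r2)" using r r2 by (rule strict_mono_o)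
    fix i assume i: "i < Suc k"
    show "(\<lambda>n. u ((r \<circ> r2) n) i) \<longlonglongrightarrow> (l(k := l2)) i"
    proof (cases "i = k")
      case True then show ?thesis using l2 by (simp add: o_def)
    next
      case False
      then have "i<k" using i by simp
      from LIMSEQ_subseq_LIMSEQ[OF l[rule_format, OF this] r2] show ?thesis using False by (simp add: o_def)
    qed
  qed
qed

lemma unbounded_seq:
  fixes S :: "nat \<Rightarrow> real"
  assumes nb: "\<not> (\<exists>Bd. \<forall>n. S n \<le> Bd)"
  shows "\<exists>\<phi>. (\<forall>j. S (\<phi> j) > real j + 1) \<and> (\<forall>j. j \<le> \<phi> j)"
proof -
  have "\<exists>n. S n > max (real j + 1) (Max (S ` {..j}))" for j
    using nb by (meson not_le_imp_less)
  then obtain \<phi> where \<phi>: "\<And>j. S (\<phi> j) > max (real j + 1) (Max (S ` {..j}))" by metis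
  have "j \<le> \<phi> j" for j
  proof (rule ccontr)
    assume "\<not> j \<le> \<phi> j"
    then have "S (\<phi> j) \<le> Max (S ` {..j})" by (intro Max_ge) auto
    moreover have "Max (S ` {..j}) < S (\<phi> j)" using \<phi>[of j] by (simp only: max_less_iff_conj)
    ultimately show False by linarith
  qed
  then show ?thesis using \<phi> by (intro exI[of _ \<phi>]) auto
qed

lemma mult_limit:
  fixes a :: "nat \<Rightarrow> 'v::real_normed_vector" and b :: "nat \<Rightarrow> nat \<Rightarrow> 'v" and m :: "nat \<Rightarrow> nat \<Rightarrow> real"
  assumes a: "a \<longlonglongrightarrow> a0" and b: "\<And>i. i<k \<Longrightarrow> (\<lambda>n. b n i) \<longlonglongrightarrow> b0 i"
    and m0: "\<And>n i. i<k \<Longrightarrow> m n i \<ge> 0"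
    and st: "\<And>n. a n + (\<Sum>i<k. m n i *\<^sub>R b n i) = 0"
    and A: "A \<subseteq> {..<k}"
    and inact: "\<And>i. i<k \<Longrightarrow> i \<notin> A \<Longrightarrow> (\<lambda>n. m n i) \<longlonglongrightarrow> 0"
    and licq: "\<And>c. (\<Sum>i\<in>A. c i *\<^sub>R b0 i) = 0 \<Longrightarrow> \<forall>i\<in>A. c i = 0"
  shows "\<exists>r l. strict_mono r \<and> (\<forall>i<k. (\<lambda>n. m (r n) i) \<longlonglongrightarrow> l i) \<and> (\<forall>i<k. l i \<ge> 0)
           \<and> (\<forall>i<k. i \<notin> A \<longrightarrow> l i = 0) \<and> a0 + (\<Sum>i<k. l i *\<^sub>R b0 i) = 0"
proof -
  define S where "S n = (\<Sum>i<k. m n i)" for n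
  have mS: "m n i \<le> S n" if "i<k" for n i
    unfolding S_def using that m0 by (intro member_le_sum) auto
  have bdd: "\<exists>Bd. \<forall>n. S n \<le> Bd"
  proof (rule ccontr)
    assume nb: "\<not> (\<exists>Bd. \<forall>n. S n \<le> Bd)"
    from unbounded_seq[OF nb] obtain \<phi> where \<phi>1: "\<And>j. S (\<phi> j) > real j + 1"
      and \<phi>2: "\<And>j. j \<le> \<phi> j" by blast
    have Spos: "S (\<phi> j) > 0" for j using \<phi>1[of j] by linarith
    define \<nu> where "\<nu> j i = m (\<phi> j) i / S (\<phi> j)" for j i
    have \<nu>b: "\<bar>\<nu> j i\<bar> \<le> 1" if "i<k" for j i
      using mS[OF that, of "\<phi> j"] m0[OF that, of "\<phi> j"] Spos[of j] unfolding \<nu>_def by (simp add: divide_le_eq_1)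
    from BW_fin[of k \<nu> 1, OF \<nu>b] obtain r \<nu>l where r: "strict_mono r"
      and \<nu>l: "\<forall>i<k. (\<lambda>n. \<nu> (r n) i) \<longlonglongrightarrow> \<nu>l i" by blast
    define \<psi> where "\<psi> n = \<phi> (r n)" for n
    have \<psi>lim: "filterlim \<psi> sequentially sequentially"
    proof -
      have "filterlim \<phi> sequentially sequentially"
        unfolding filterlim_at_top eventually_sequentially using \<phi>2 le_trans by blast
      from filterlim_compose[OF this filterlim_subseq[OF r]] show ?thesis unfolding \<psi>_def by simp
    qed
    have a\<psi>: "(\<lambda>n. a (\<psi> n)) \<longlonglongrightarrow> a0" by (rule filterlim_compose[OF a \<psi>lim])
    have b\<psi>: "(\<lambda>n. b (\<psi> n) i) \<longlonglongrightarrow> b0 i" if "i<k" for i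
      by (rule filterlim_compose[OF b[OF that] \<psi>lim])
    have invS: "(\<lambda>n. 1 / S (\<psi> n)) \<longlonglongrightarrow> 0"
    proof (rule tendsto_sandwich[of "\<lambda>n. 0" _ _ "\<lambda>n. 1 / (real n + 1)"])
      show "\<forall>\<^sub>F n in sequentially. 0 \<le> 1 / S (\<psi> n)" using Spos unfolding \<psi>_def by (simp add: less_imp_le)
      have "1 / S (\<psi> n) \<le> 1 / (real n + 1)" for n
      proof -
        have "real n + 1 \<le> real (r n) + 1" using seq_suble[OF r, of n] by simp
        also have "\<dots> < S (\<psi> n)" using \<phi>1 unfolding \<psi>_def by simp
        finally show ?thesis by (simp add: frac_le)
      qed
      then show "\<forall>\<^sub>F n in sequentially. 1 / S (\<psi> n) \<le> 1 / (real n + 1)" by simp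
      show "(\<lambda>n. 1 / (real n + 1)) \<longlonglongrightarrow> 0"
        using LIMSEQ_inverse_real_of_nat by (simp add: inverse_eq_divide add.commute)
    qed simp
    have st2: "(1 / S (\<psi> n)) *\<^sub>R a (\<psi> n) + (\<Sum>i<k. \<nu> (r n) i *\<^sub>R b (\<psi> n) i) = 0" for n
    proof -
      have "(1 / S (\<psi> n)) *\<^sub>R (a (\<psi> n) + (\<Sum>i<k. m (\<psi> n) i *\<^sub>R b (\<psi> n) i)) = 0"
        using st[of "\<psi> n"] by (simp only: scaleR_zero_right)
      moreover have e0: "\<And>i. (1 / S (\<psi> n)) * m (\<psi> n) i = \<nu> (r n) i"
        unfolding \<nu>_def \<psi>_def by simp
      have e: "\<And>i. (1 / S (\<psi> n)) *\<^sub>R (m (\<psi> n) i *\<^sub>R b (\<psi> n) i) = \<nu> (r n) i *\<^sub>R b (\<psi> n) i"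
        by (simp only: scaleR_scaleR e0)
      ultimately show ?thesis by (simp only: scaleR_add_right scaleR_sum_right e)
    qed
    have "((\<lambda>n. (1 / S (\<psi> n)) *\<^sub>R a (\<psi> n) + (\<Sum>i<k. \<nu> (r n) i *\<^sub>R b (\<psi> n) i))
          \<longlonglongrightarrow> 0 *\<^sub>R a0 + (\<Sum>i<k. \<nu>l i *\<^sub>R b0 i))"
      using invS a\<psi> \<nu>l b\<psi> by (intro tendsto_intros) auto
    then have z: "(\<Sum>i<k. \<nu>l i *\<^sub>R b0 i) = 0"
      using st2 by (simp add: LIMSEQ_const_iff)
    have \<nu>A: "\<nu>l i = 0" if "i<k" "i \<notin> A" for i
    proof -
      have mlim: "(\<lambda>n. m (\<psi> n) i) \<longlonglongrightarrow> 0" by (rule filterlim_compose[OF inact[OF that] \<psi>lim])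
      have bnd: "0 \<le> \<nu> (r n) i \<and> \<nu> (r n) i \<le> m (\<psi> n) i" for n
      proof -
        have "S (\<psi> n) \<ge> 1" using \<phi>1[of "r n"] unfolding \<psi>_def by simp
        moreover have "m (\<psi> n) i \<le> m (\<psi> n) i * S (\<psi> n)"
          using mult_left_mono[of 1 "S (\<psi> n)" "m (\<psi> n) i"] m0[OF that(1), of "\<psi> n"] \<open>S (\<psi> n) \<ge> 1\<close> by simp
        ultimately have Sp: "S (\<psi> n) > 0" and mm: "m (\<psi> n) i \<le> m (\<psi> n) i * S (\<psi> n)" by auto
        have nu: "\<nu> (r n) i = m (\<psi> n) i / S (\<psi> n)" unfolding \<nu>_def \<psi>_def ..
        have "0 \<le> m (\<psi> n) i / S (\<psi> n)" by (rule divide_nonneg_pos[OF m0[OF that(1)] Sp])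
        moreover have "m (\<psi> n) i / S (\<psi> n) \<le> m (\<psi> n) i" using pos_divide_le_eq[OF Sp] mm by blast
        ultimately show ?thesis unfolding nu by blast
      qed
      have ev1: "\<forall>\<^sub>F n in sequentially. 0 \<le> \<nu> (r n) i" using bnd by (intro always_eventually) blast
      have ev2: "\<forall>\<^sub>F n in sequentially. \<nu> (r n) i \<le> m (\<psi> n) i" using bnd by (intro always_eventually) blast
      have "(\<lambda>n. \<nu> (r n) i) \<longlonglongrightarrow> 0" by (rule tendsto_sandwich[OF ev1 ev2 tendsto_const mlim])
      from LIMSEQ_unique[OF \<nu>l[rule_format, OF that(1)] this] show ?thesis .
    qed
    have "(\<Sum>i\<in>A. \<nu>l i *\<^sub>R b0 i) = (\<Sum>i<k. \<nu>l i *\<^sub>R b0 i)"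
      using A \<nu>A by (intro sum.mono_neutral_left) auto
    then have "\<forall>i\<in>A. \<nu>l i = 0" using z licq by simp
    then have all0: "\<forall>i<k. \<nu>l i = 0" using \<nu>A by blast
    have "(\<lambda>n. \<Sum>i<k. \<nu> (r n) i) \<longlonglongrightarrow> (\<Sum>i<k. \<nu>l i)"
      using \<nu>l by (intro tendsto_sum) auto
    moreover have "(\<Sum>i<k. \<nu> (r n) i) = 1" for n
      using Spos[of "r n"] unfolding \<nu>_def S_def by (simp add: sum_divide_distrib[symmetric])
    ultimately have "(\<Sum>i<k. \<nu>l i) = 1" by (simp add: LIMSEQ_const_iff)
    with all0 show False by simp
  qed
  then obtain Bd where Bd: "\<And>n. S n \<le> Bd" by blast
  have "\<bar>m n i\<bar> \<le> Bd" if "i<k" for n i using mS[OF that, of n] Bd[of n] m0[OF that, of n] by simp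
  from BW_fin[of k m Bd, OF this] obtain r l where r: "strict_mono r"
    and l: "\<forall>i<k. (\<lambda>n. m (r n) i) \<longlonglongrightarrow> l i" by blast
  have l0: "\<forall>i<k. l i \<ge> 0"
    using l m0 by (auto intro!: LIMSEQ_le_const[of "\<lambda>n. m (r n) _"])
  have lA: "\<forall>i<k. i \<notin> A \<longrightarrow> l i = 0"
  proof (intro allI impI)
    fix i assume i: "i<k" "i \<notin> A"
    from LIMSEQ_subseq_LIMSEQ[OF inact[OF i] r] have "(\<lambda>n. m (r n) i) \<longlonglongrightarrow> 0" by (simp add: o_def)
    from LIMSEQ_unique[OF l[rule_format, OF i(1)] this] show "l i = 0" .
  qed
  have ar: "(\<lambda>n. a (r n)) \<longlonglongrightarrow> a0" using LIMSEQ_subseq_LIMSEQ[OF a r] by (simp add: o_def)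
  have br: "(\<lambda>n. b (r n) i) \<longlonglongrightarrow> b0 i" if "i<k" for i
    using LIMSEQ_subseq_LIMSEQ[OF b[OF that] r] by (simp add: o_def)
  have "(\<lambda>n. a (r n) + (\<Sum>i<k. m (r n) i *\<^sub>R b (r n) i)) \<longlonglongrightarrow> a0 + (\<Sum>i<k. l i *\<^sub>R b0 i)"
    using ar l br by (intro tendsto_intros) auto
  then have "a0 + (\<Sum>i<k. l i *\<^sub>R b0 i) = 0" using st by (simp add: LIMSEQ_const_iff)
  then show ?thesis using r l l0 lA by blast
qed


context BL begin

lemma ystar_eq:
  assumes x: "x\<in>X" and lf: "\<forall>i<k. h i x l \<le> 0" and lm: "\<forall>z. (\<forall>i<k. h i x z \<le> 0) \<longrightarrow> g x l \<le> g x z"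
  shows "ystar g h k x = l"
  unfolding ystar_def
proof (rule the_equality)
  show "l \<in> feas h k x \<and> (\<forall>z\<in>feas h k x. g x l \<le> g x z)" using lf lm by (auto simp: feas_def)
next
  fix l' assume l': "l' \<in> feas h k x \<and> (\<forall>z\<in>feas h k x. g x l' \<le> g x z)"
  define m where "m = (1/2) *\<^sub>R l' + (1 - 1/2) *\<^sub>R l"
  have mf: "\<forall>i<k. h i x m \<le> 0"
  proof (intro allI impI)
    fix i assume i: "i<k"
    have "h i x m \<le> 1/2 * h i x l' + (1-1/2) * h i x l"
      using convex_sc0[OF cvx[OF x i], of "1/2" l' l] unfolding m_def by simp
    moreover have "h i x l' \<le> 0" using l' i by (auto simp: feas_def)
    ultimately show "h i x m \<le> 0" using lf i by force
  qed
  define c where "c = mu/2*(1/2)*(1-1/2)*(norm(l'-l))\<^sup>2"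
  have gm: "g x m \<le> 1/2 * g x l' + (1-1/2) * g x l - c"
    using sc_D[OF sc[OF x], of "1/2" l' l] unfolding m_def c_def by simp
  have "g x l \<le> g x m" using lm mf by blast
  moreover have "g x l' \<le> g x l" using l' lf by (auto simp: feas_def)
  moreover have "g x l \<le> g x l'" using lm l' by (auto simp: feas_def)
  moreover have "g x m \<le> 1/2 * g x l' + 1/2 * g x l - c" using gm by simp
  ultimately have "c \<le> 0" by linarith
  then have "(norm(l'-l))\<^sup>2 \<le> 0" unfolding c_def using mu by (simp add: mult_le_0_iff)
  then show "l' = l" by simp
qed

lemma grad_g: "grad_y g x y = Gy x y" by (rule grad_y_eq[OF dg])
lemma grad_h: "i<k \<Longrightarrow> grad_y (h i) x y = Hy i x y" by (rule grad_y_eq[OF dh])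

lemma kkt_unique:
  assumes x: "x\<in>X" and l1: "is_KKT_mult g h k x l1" and l2: "is_KKT_mult g h k x l2"
  shows "l1 = l2"
proof -
  define ys where "ys = ystar g h k x"
  define A where "A = {i. i < k \<and> h i x ys = 0}"
  have s1: "Gy x ys + (\<Sum>i<k. l1 i *\<^sub>R Hy i x ys) = 0"
    using l1 unfolding is_KKT_mult_def ys_def[symmetric] grad_g by (simp add: grad_h)
  have s2: "Gy x ys + (\<Sum>i<k. l2 i *\<^sub>R Hy i x ys) = 0"
    using l2 unfolding is_KKT_mult_def ys_def[symmetric] grad_g by (simp add: grad_h)
  have inact: "l1 i = l2 i" if "i<k" "i \<notin> A" for i
  proof -
    have "h i x ys \<noteq> 0" using that unfolding A_def by simp
    moreover have "l1 i * h i x ys = 0" "l2 i * h i x ys = 0"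
      using l1 l2 that(1) unfolding is_KKT_mult_def ys_def[symmetric] by auto
    ultimately show ?thesis by simp
  qed
  have "(\<Sum>i\<in>A. (l1 i - l2 i) *\<^sub>R Hy i x ys) = (\<Sum>i<k. (l1 i - l2 i) *\<^sub>R Hy i x ys)"
    using inact by (intro sum.mono_neutral_left) (auto simp: A_def)
  also have "\<dots> = (\<Sum>i<k. l1 i *\<^sub>R Hy i x ys) - (\<Sum>i<k. l2 i *\<^sub>R Hy i x ys)"
    by (simp add: scaleR_diff_left sum_subtractf)
  also have "\<dots> = (Gy x ys + (\<Sum>i<k. l1 i *\<^sub>R Hy i x ys)) - (Gy x ys + (\<Sum>i<k. l2 i *\<^sub>R Hy i x ys))"
    by simp
  also have "\<dots> = 0" unfolding s1 s2 by simp
  finally have Z: "(\<Sum>i\<in>A. (l1 i - l2 i) *\<^sub>R Hy i x ys) = 0" .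
  have "\<forall>i\<in>A. l1 i - l2 i = 0"
    using licq[OF x, of "\<lambda>i. l1 i - l2 i", OF Z[unfolded A_def ys_def]] unfolding A_def ys_def .
  then have c1: "l1 i = l2 i" if "i<k" for i using inact that by force
  moreover have c2: "l1 i = l2 i" if "\<not> i<k" for i using l1 l2 that unfolding is_KKT_mult_def by auto
  show ?thesis
  proof (rule ext)
    fix i show "l1 i = l2 i" using c1 c2 by (cases "i<k") auto
  qed
qed

lemma ev_strict:
  assumes xl: "xs \<longlonglongrightarrow> x0" and z: "\<forall>i<k. h i x0 z < 0"
  shows "eventually (\<lambda>n. \<forall>i<k. h i (xs n) z < 0) sequentially"
proof -
  have "\<forall>i\<in>{..<k}. eventually (\<lambda>n. h i (xs n) z < 0) sequentially"
  proof
    fix i assume i: "i \<in> {..<k}"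
    have "(\<lambda>n. h i (xs n) z) \<longlonglongrightarrow> h i x0 z" using seq_cont[OF ch xl tendsto_const] i by auto
    then show "eventually (\<lambda>n. h i (xs n) z < 0) sequentially" using z i by (auto intro: order_tendstoD)
  qed
  then have "eventually (\<lambda>n. \<forall>i\<in>{..<k}. h i (xs n) z < 0) sequentially"
    by (rule eventually_ball_finite[rotated]) simp
  then show ?thesis by (rule eventually_mono) auto
qed


lemma ycon:
  assumes xs: "\<And>n. xs n \<in> X" and xl: "xs \<longlonglongrightarrow> x0" and x0: "x0 \<in> X"
    and tp: "\<And>n. ts n > 0" and tl: "ts \<longlonglongrightarrow> 0"
  shows "\<exists>r. strict_mono r \<and> (\<lambda>n. yb (ts (r n)) (xs (r n))) \<longlonglongrightarrow> ystar g h k x0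
             \<and> (\<forall>i<k. h i x0 (ystar g h k x0) \<le> 0)"
proof -
  define Y where "Y n = yb (ts n) (xs n)" for n
  obtain y0 where y0: "\<forall>i<k. h i x0 y0 < 0" using slater[OF x0] by blast
  have evy0: "eventually (\<lambda>n. \<forall>i<k. h i (xs n) y0 < 0) sequentially" by (rule ev_strict[OF xl y0])
  have "convergent (\<lambda>n. Gy (xs n) y0)"
    using seq_cont[OF cGy xl tendsto_const] by (auto simp: convergent_def)
  then obtain C where C0: "C > 0" and C: "\<And>n. norm (Gy (xs n) y0) \<le> C"
    using convergent_imp_Bseq BseqE by metis
  have "convergent ts" using tl by (auto simp: convergent_def)
  then obtain D where D0: "D > 0" and D: "\<And>n. norm (ts n) \<le> D"
    using convergent_imp_Bseq BseqE by metis
  define R where "R = max 1 ((C + real k * D) / mu)"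
  have Ybound: "norm (Y n - y0) \<le> R" if hn: "\<forall>i<k. h i (xs n) y0 < 0" for n
  proof -
    define d where "d = norm (Y n - y0)"
    have gp: "mu/2 * (norm (y0 - Y n))\<^sup>2 \<le> g (xs n) y0 - g (xs n) (Y n) + real k * ts n"
      unfolding Y_def by (rule gap[OF xs tp]) (use hn in auto)
    have tg: "g (xs n) (Y n) \<ge> g (xs n) y0 + Gy (xs n) y0 \<bullet> (Y n - y0) + mu/2 * (norm (Y n - y0))\<^sup>2"
      by (rule tang_g[OF xs])
    have cs: "- (Gy (xs n) y0 \<bullet> (Y n - y0)) \<le> C * d"
    proof -
      have "- (Gy (xs n) y0 \<bullet> (Y n - y0)) \<le> norm (Gy (xs n) y0) * norm (Y n - y0)"
        using norm_cauchy_schwarz[of "- Gy (xs n) y0" "Y n - y0"] by simp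
      also have "\<dots> \<le> C * d" unfolding d_def using C[of n] by (simp add: mult_right_mono)
      finally show ?thesis .
    qed
    have kt: "real k * ts n \<le> real k * D" using D[of n] tp[of n] by (simp add: mult_left_mono)
    have nrm: "norm (y0 - Y n) = d" unfolding d_def by (simp add: norm_minus_commute)
    have main: "mu * d\<^sup>2 \<le> C * d + real k * D"
      using gp tg cs kt unfolding nrm d_def[symmetric] by linarith
    show ?thesis
    proof (cases "d \<le> 1")
      case True then show ?thesis unfolding R_def d_def by simp
    next
      case False
      then have "mu * d * d \<le> (C + real k * D) * d"
      proof -
        have "real k * D \<le> real k * D * d" using False D0 mult_left_mono[of 1 d "real k * D"] by simp
        then show ?thesis using main by (simp add: power2_eq_square algebra_simps)
      qed
      then have "mu * d \<le> C + real k * D" using False by (simp add: mult_le_cancel_right)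
      then have "d \<le> (C + real k * D) / mu" using mu by (simp add: field_simps)
      then show ?thesis unfolding R_def d_def by simp
    qed
  qed
  from evy0 obtain N where N: "\<And>n. n \<ge> N \<Longrightarrow> \<forall>i<k. h i (xs n) y0 < 0"
    unfolding eventually_sequentially by blast
  have sqc: "seq_compact (cball y0 R)" by (rule compact_imp_seq_compact) simp
  have mem: "\<forall>n. Y (n + N) \<in> cball y0 R"
    using Ybound N by (simp add: dist_norm norm_minus_commute)
  from sqc[unfolded seq_compact_def, rule_format, of "\<lambda>n. Y (n + N)"] mem
  obtain l r where r: "strict_mono r" and lY: "((\<lambda>n. Y (n + N)) \<circ> r) \<longlonglongrightarrow> l"
    by blast
  define r' where "r' n = r n + N" for n
  have r': "strict_mono r'" using r unfolding r'_def strict_mono_def by simp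
  have Yl: "(\<lambda>n. Y (r' n)) \<longlonglongrightarrow> l" using lY unfolding r'_def o_def by simp
  have xr: "(\<lambda>n. xs (r' n)) \<longlonglongrightarrow> x0" using LIMSEQ_subseq_LIMSEQ[OF xl r'] by (simp add: o_def)
  have tr: "(\<lambda>n. ts (r' n)) \<longlonglongrightarrow> 0" using LIMSEQ_subseq_LIMSEQ[OF tl r'] by (simp add: o_def)
  have lf: "\<forall>i<k. h i x0 l \<le> 0"
  proof (intro allI impI)
    fix i assume i: "i<k"
    have "(\<lambda>n. h i (xs (r' n)) (Y (r' n))) \<longlonglongrightarrow> h i x0 l" by (rule seq_cont[OF ch[OF i] xr Yl])
    moreover have "\<forall>n. h i (xs (r' n)) (Y (r' n)) \<le> 0"
      using yb_S[OF xs tp i] unfolding Y_def by (simp add: less_imp_le)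
    ultimately show "h i x0 l \<le> 0" by (intro LIMSEQ_le_const2) auto
  qed
  have lm: "g x0 l \<le> g x0 z" if zf: "\<forall>i<k. h i x0 z \<le> 0" for z
  proof -
    have step: "g x0 l \<le> \<theta> * g x0 y0 + (1-\<theta>) * g x0 z" if th: "0 < \<theta>" "\<theta> \<le> 1" for \<theta>
    proof -
      define z\<theta> where "z\<theta> = \<theta> *\<^sub>R y0 + (1-\<theta>) *\<^sub>R z"
      have zs: "\<forall>i<k. h i x0 z\<theta> < 0"
      proof (intro allI impI)
        fix i assume i: "i<k"
        have "h i x0 z\<theta> \<le> \<theta> * h i x0 y0 + (1-\<theta>) * h i x0 z"
          using convex_sc0[OF cvx[OF x0 i], of \<theta> y0 z] th unfolding z\<theta>_def by simp
        moreover have "\<theta> * h i x0 y0 < 0" using th y0 i by (simp add: mult_pos_neg)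
        moreover have "(1-\<theta>) * h i x0 z \<le> 0" using th zf i by (simp add: mult_nonneg_nonpos)
        ultimately show "h i x0 z\<theta> < 0" by linarith
      qed
      have ev: "eventually (\<lambda>n. g (xs (r' n)) (Y (r' n)) \<le> g (xs (r' n)) z\<theta> + real k * ts (r' n)) sequentially"
        using ev_strict[OF xr zs]
      proof (rule eventually_mono)
        fix n assume "\<forall>i<k. h i (xs (r' n)) z\<theta> < 0"
        then have "mu/2 * (norm (z\<theta> - Y (r' n)))\<^sup>2 \<le> g (xs (r' n)) z\<theta> - g (xs (r' n)) (Y (r' n)) + real k * ts (r' n)"
          unfolding Y_def by (intro gap[OF xs tp]) (auto simp: less_imp_le)
        moreover have "0 \<le> mu/2 * (norm (z\<theta> - Y (r' n)))\<^sup>2" using mu by simp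
        ultimately show "g (xs (r' n)) (Y (r' n)) \<le> g (xs (r' n)) z\<theta> + real k * ts (r' n)" by linarith
      qed
      have l1: "(\<lambda>n. g (xs (r' n)) (Y (r' n))) \<longlonglongrightarrow> g x0 l" by (rule seq_cont[OF cg xr Yl])
      have l2: "(\<lambda>n. g (xs (r' n)) z\<theta> + real k * ts (r' n)) \<longlonglongrightarrow> g x0 z\<theta> + real k * 0"
        by (intro tendsto_intros seq_cont[OF cg xr] tr)
      have "g x0 l \<le> g x0 z\<theta>" using tendsto_le[OF _ l2 l1 ev] by simp
      also have "g x0 z\<theta> \<le> \<theta> * g x0 y0 + (1-\<theta>) * g x0 z - mu/2*\<theta>*(1-\<theta>)*(norm(y0-z))\<^sup>2"
        using sc_D[OF sc[OF x0], of \<theta> y0 z] th unfolding z\<theta>_def by simp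
      also have "\<dots> \<le> \<theta> * g x0 y0 + (1-\<theta>) * g x0 z" using th mu by simp
      finally show ?thesis .
    qed
    define \<theta>s where "\<theta>s n = inverse (real (Suc n))" for n
    have "(\<lambda>n. \<theta>s n * g x0 y0 + (1 - \<theta>s n) * g x0 z) \<longlonglongrightarrow> 0 * g x0 y0 + (1 - 0) * g x0 z"
      unfolding \<theta>s_def by (intro tendsto_intros LIMSEQ_inverse_real_of_nat)
    moreover have "\<forall>n. g x0 l \<le> \<theta>s n * g x0 y0 + (1 - \<theta>s n) * g x0 z"
      unfolding \<theta>s_def by (intro allI step) (auto simp: field_simps)
    ultimately show ?thesis by (intro LIMSEQ_le_const[where X="\<lambda>n. \<theta>s n * g x0 y0 + (1 - \<theta>s n) * g x0 z"]) auto
  qed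
  have ys: "ystar g h k x0 = l" by (rule ystar_eq[OF x0 lf]) (use lm in blast)
  show ?thesis using r' Yl lf unfolding ys Y_def by blast
qed

end


context BL begin

lemma multcon:
  assumes xs: "\<And>n. xs n \<in> X" and xl: "xs \<longlonglongrightarrow> x0" and x0: "x0 \<in> X"
    and tp: "\<And>n. ts n > 0" and tl: "ts \<longlonglongrightarrow> 0"
  shows "\<exists>r. strict_mono r \<and> (\<forall>i<k. (\<lambda>n. mlt (ts (r n)) (xs (r n)) i) \<longlonglongrightarrow> lambda g h k x0 i)"
proof -
  define ys where "ys = ystar g h k x0"
  obtain r1 where r1: "strict_mono r1" and Yl: "(\<lambda>n. yb (ts (r1 n)) (xs (r1 n))) \<longlonglongrightarrow> ys"
    and ysf: "\<forall>i<k. h i x0 ys \<le> 0"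
    using ycon[OF xs xl x0 tp tl] unfolding ys_def by blast
  define x' where "x' n = xs (r1 n)" for n
  define t' where "t' n = ts (r1 n)" for n
  define y' where "y' n = yb (t' n) (x' n)" for n
  have x'l: "x' \<longlonglongrightarrow> x0" using LIMSEQ_subseq_LIMSEQ[OF xl r1] unfolding x'_def by (simp add: o_def)
  have t'l: "t' \<longlonglongrightarrow> 0" using LIMSEQ_subseq_LIMSEQ[OF tl r1] unfolding t'_def by (simp add: o_def)
  have y'l: "y' \<longlonglongrightarrow> ys" using Yl unfolding y'_def x'_def t'_def .
  have x'X: "x' n \<in> X" for n unfolding x'_def by (rule xs)
  have t'p: "t' n > 0" for n unfolding t'_def by (rule tp)
  define A where "A = {i. i < k \<and> h i x0 ys = 0}"
  have "\<exists>r l. strict_mono r \<and> (\<forall>i<k. (\<lambda>n. mlt (t' (r n)) (x' (r n)) i) \<longlonglongrightarrow> l i) \<and> (\<forall>i<k. l i \<ge> 0)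
           \<and> (\<forall>i<k. i \<notin> A \<longrightarrow> l i = 0) \<and> Gy x0 ys + (\<Sum>i<k. l i *\<^sub>R Hy i x0 ys) = 0"
  proof (rule mult_limit[where a="\<lambda>n. Gy (x' n) (y' n)" and b="\<lambda>n i. Hy i (x' n) (y' n)" and m="\<lambda>n i. mlt (t' n) (x' n) i"])
    show "(\<lambda>n. Gy (x' n) (y' n)) \<longlonglongrightarrow> Gy x0 ys" by (rule seq_cont[OF cGy x'l y'l])
    show "(\<lambda>n. Hy i (x' n) (y' n)) \<longlonglongrightarrow> Hy i x0 ys" if "i<k" for i by (rule seq_cont[OF cHy[OF that] x'l y'l])
    show "mlt (t' n) (x' n) i \<ge> 0" if "i<k" for n i using mlt_pos[OF x'X[of n] t'p[of n] that] by simp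
    show "Gy (x' n) (y' n) + (\<Sum>i<k. mlt (t' n) (x' n) i *\<^sub>R Hy i (x' n) (y' n)) = 0" for n
      using stat[OF x'X t'p] unfolding y'_def .
    show "A \<subseteq> {..<k}" unfolding A_def by auto
    show "(\<lambda>n. mlt (t' n) (x' n) i) \<longlonglongrightarrow> 0" if i: "i<k" "i \<notin> A" for i
    proof -
      have hneg: "h i x0 ys < 0" using ysf i unfolding A_def by force
      have "(\<lambda>n. h i (x' n) (y' n)) \<longlonglongrightarrow> h i x0 ys" by (rule seq_cont[OF ch[OF i(1)] x'l y'l])
      then have "(\<lambda>n. t' n / (- h i (x' n) (y' n))) \<longlonglongrightarrow> 0 / (- h i x0 ys)"
        using hneg by (intro tendsto_intros t'l) auto
      then show ?thesis unfolding mlt_def y'_def by simp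
    qed
    show "\<forall>i\<in>A. c i = 0" if "(\<Sum>i\<in>A. c i *\<^sub>R Hy i x0 ys) = 0" for c
      using licq[OF x0, of c] that unfolding A_def ys_def by blast
  qed
  then obtain r2 l where r2: "strict_mono r2" and ml: "\<forall>i<k. (\<lambda>n. mlt (t' (r2 n)) (x' (r2 n)) i) \<longlonglongrightarrow> l i"
    and l0: "\<forall>i<k. l i \<ge> 0" and lA: "\<forall>i<k. i \<notin> A \<longrightarrow> l i = 0"
    and lst: "Gy x0 ys + (\<Sum>i<k. l i *\<^sub>R Hy i x0 ys) = 0" by blast
  define lam where "lam i = (if i<k then l i else 0)" for i
  have kkt: "is_KKT_mult g h k x0 lam"
    unfolding is_KKT_mult_def ys_def[symmetric]
  proof (intro conjI allI impI)
    fix i assume i: "i<k"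
    show "0 \<le> lam i" using l0 i unfolding lam_def by simp
    show "lam i * h i x0 ys = 0" using lA i unfolding lam_def A_def by auto
  next
    fix i assume "k \<le> i" then show "lam i = 0" unfolding lam_def by simp
  next
    have "(\<Sum>i<k. lam i *\<^sub>R grad_y (h i) x0 ys) = (\<Sum>i<k. l i *\<^sub>R Hy i x0 ys)"
      by (rule sum.cong) (auto simp: lam_def grad_h)
    then show "grad_y g x0 ys + (\<Sum>i<k. lam i *\<^sub>R grad_y (h i) x0 ys) = 0"
      using lst by (simp add: grad_g)
  qed
  have "lambda g h k x0 = lam"
    unfolding lambda_def
  proof (rule the_equality)
    show "is_KKT_mult g h k x0 lam" by (rule kkt)
    fix lam' assume "is_KKT_mult g h k x0 lam'"
    then show "lam' = lam" by (rule kkt_unique[OF x0 _ kkt])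
  qed
  then have "\<forall>i<k. (\<lambda>n. mlt (t' (r2 n)) (x' (r2 n)) i) \<longlonglongrightarrow> lambda g h k x0 i"
    using ml unfolding lam_def by simp
  moreover have "strict_mono (r1 \<circ> r2)" using r1 r2 by (rule strict_mono_o)
  ultimately show ?thesis unfolding t'_def x'_def by (intro exI[of _ "r1 \<circ> r2"]) auto
qed

end


context BL begin

lemma approx_pt:
  assumes x: "x\<in>X" and i0: "i0<k" and d: "\<delta>>0" and T: "T>0"
  shows "\<exists>t. 0<t \<and> t\<le>T \<and> \<bar>mlt t x i0 - lambda g h k x i0\<bar> < \<delta>"
proof -
  define ts where "ts n = inverse (real (Suc n))" for n
  have tp: "ts n > 0" for n unfolding ts_def by simp
  have tl: "ts \<longlonglongrightarrow> 0" unfolding ts_def by (rule LIMSEQ_inverse_real_of_nat)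
  obtain r where r: "strict_mono r" and c: "\<forall>i<k. (\<lambda>n. mlt (ts (r n)) x i) \<longlonglongrightarrow> lambda g h k x i"
    using multcon[of "\<lambda>n. x" x ts, OF x tendsto_const x tp tl] by blast
  have e1: "eventually (\<lambda>n. \<bar>mlt (ts (r n)) x i0 - lambda g h k x i0\<bar> < \<delta>) sequentially"
    using c[rule_format, OF i0] d unfolding tendsto_iff dist_real_def by blast
  have "(\<lambda>n. ts (r n)) \<longlonglongrightarrow> 0" using LIMSEQ_subseq_LIMSEQ[OF tl r] by (simp add: o_def)
  then have e2: "eventually (\<lambda>n. ts (r n) < T) sequentially" using T by (auto intro: order_tendstoD)
  from eventually_conj[OF e1 e2] obtain N where "\<forall>n\<ge>N. \<bar>mlt (ts (r n)) x i0 - lambda g h k x i0\<bar> < \<delta> \<and> ts (r n) < T"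
    unfolding eventually_sequentially by blast
  then show ?thesis using tp[of "r N"] by (intro exI[of _ "ts (r N)"]) auto
qed

lemma main:
  assumes i0: "i0<k" and e: "\<epsilon>>0"
  shows "\<exists>T>0. \<forall>x\<in>X. \<forall>t. 0 < t \<and> t \<le> T \<longrightarrow> \<bar>lambda g h k x i0 - mlt t x i0\<bar> \<le> \<epsilon>"
proof (rule ccontr)
  assume "\<not> ?thesis"
  then have "\<forall>T>0. \<exists>x\<in>X. \<exists>t. 0 < t \<and> t \<le> T \<and> \<epsilon> < \<bar>lambda g h k x i0 - mlt t x i0\<bar>"
    by (auto simp: not_le)
  then have "\<forall>n. \<exists>x t. x\<in>X \<and> 0 < t \<and> t \<le> inverse (real (Suc n)) \<and> \<epsilon> < \<bar>lambda g h k x i0 - mlt t x i0\<bar>"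
    by (metis inverse_positive_iff_positive of_nat_0_less_iff zero_less_Suc)
  then obtain xs ts where xs: "\<And>n. xs n \<in> X" and tp: "\<And>n. 0 < ts n" and tT: "\<And>n. ts n \<le> inverse (real (Suc n))"
    and big: "\<And>n. \<epsilon> < \<bar>lambda g h k (xs n) i0 - mlt (ts n) (xs n) i0\<bar>"
    by metis
  have "\<forall>n. \<exists>t. 0<t \<and> t \<le> inverse (real (Suc n)) \<and> \<bar>mlt t (xs n) i0 - lambda g h k (xs n) i0\<bar> < inverse (real (Suc n))"
    using approx_pt[OF xs i0] by simp
  then obtain ts' where tp': "\<And>n. 0 < ts' n" and tT': "\<And>n. ts' n \<le> inverse (real (Suc n))"
    and cl: "\<And>n. \<bar>mlt (ts' n) (xs n) i0 - lambda g h k (xs n) i0\<bar> < inverse (real (Suc n))"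
    by metis
  have tl: "ts \<longlonglongrightarrow> 0"
  proof (rule tendsto_sandwich[of "\<lambda>n. 0" _ _ "\<lambda>n. inverse (real (Suc n))"])
    show "\<forall>\<^sub>F n in sequentially. 0 \<le> ts n" by (intro always_eventually allI less_imp_le tp)
    show "\<forall>\<^sub>F n in sequentially. ts n \<le> inverse (real (Suc n))" by (intro always_eventually allI tT)
  qed (intro tendsto_const LIMSEQ_inverse_real_of_nat)+
  have tl': "ts' \<longlonglongrightarrow> 0"
  proof (rule tendsto_sandwich[of "\<lambda>n. 0" _ _ "\<lambda>n. inverse (real (Suc n))"])
    show "\<forall>\<^sub>F n in sequentially. 0 \<le> ts' n" by (intro always_eventually allI less_imp_le tp')
    show "\<forall>\<^sub>F n in sequentially. ts' n \<le> inverse (real (Suc n))" by (intro always_eventually allI tT')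
  qed (intro tendsto_const LIMSEQ_inverse_real_of_nat)+
  have "seq_compact X" by (rule compact_imp_seq_compact[OF cX])
  from this[unfolded seq_compact_def, rule_format, of xs] xs
  obtain x0 r1 where x0: "x0 \<in> X" and r1: "strict_mono r1" and x0l: "(xs \<circ> r1) \<longlonglongrightarrow> x0" by blast
  have x1l: "(\<lambda>n. xs (r1 n)) \<longlonglongrightarrow> x0" using x0l by (simp add: o_def)
  have t1l: "(\<lambda>n. ts (r1 n)) \<longlonglongrightarrow> 0" using LIMSEQ_subseq_LIMSEQ[OF tl r1] by (simp add: o_def)
  obtain r2 where r2: "strict_mono r2"
    and A: "\<forall>i<k. (\<lambda>n. mlt (ts (r1 (r2 n))) (xs (r1 (r2 n))) i) \<longlonglongrightarrow> lambda g h k x0 i"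
    using multcon[of "\<lambda>n. xs (r1 n)" x0 "\<lambda>n. ts (r1 n)", OF xs x1l x0 tp t1l] by blast
  have x2l: "(\<lambda>n. xs (r1 (r2 n))) \<longlonglongrightarrow> x0" using LIMSEQ_subseq_LIMSEQ[OF x1l r2] by (simp add: o_def)
  have t2l: "(\<lambda>n. ts' (r1 (r2 n))) \<longlonglongrightarrow> 0"
    using LIMSEQ_subseq_LIMSEQ[OF tl' strict_mono_o[OF r1 r2]] by (simp add: o_def)
  obtain r3 where r3: "strict_mono r3"
    and B: "\<forall>i<k. (\<lambda>n. mlt (ts' (r1 (r2 (r3 n)))) (xs (r1 (r2 (r3 n)))) i) \<longlonglongrightarrow> lambda g h k x0 i"
    using multcon[of "\<lambda>n. xs (r1 (r2 n))" x0 "\<lambda>n. ts' (r1 (r2 n))", OF xs x2l x0 tp' t2l] by blast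
  define q where "q n = r1 (r2 (r3 n))" for n
  have q: "strict_mono q" unfolding q_def using strict_mono_o[OF strict_mono_o[OF r1 r2] r3] by (simp add: o_def)
  have An: "(\<lambda>n. mlt (ts (q n)) (xs (q n)) i0) \<longlonglongrightarrow> lambda g h k x0 i0"
    using LIMSEQ_subseq_LIMSEQ[OF A[rule_format, OF i0] r3] unfolding q_def by (simp add: o_def)
  have Bn: "(\<lambda>n. mlt (ts' (q n)) (xs (q n)) i0) \<longlonglongrightarrow> lambda g h k x0 i0"
    using B[rule_format, OF i0] unfolding q_def .
  have Cn: "(\<lambda>n. mlt (ts' (q n)) (xs (q n)) i0 - lambda g h k (xs (q n)) i0) \<longlonglongrightarrow> 0"
  proof -
    have "(\<lambda>n. \<bar>mlt (ts' (q n)) (xs (q n)) i0 - lambda g h k (xs (q n)) i0\<bar>) \<longlonglongrightarrow> 0"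
    proof (rule tendsto_sandwich[of "\<lambda>n. 0" _ _ "\<lambda>n. inverse (real (Suc n))"])
      show "\<forall>\<^sub>F n in sequentially. 0 \<le> \<bar>mlt (ts' (q n)) (xs (q n)) i0 - lambda g h k (xs (q n)) i0\<bar>" by simp
      have "\<bar>mlt (ts' (q n)) (xs (q n)) i0 - lambda g h k (xs (q n)) i0\<bar> \<le> inverse (real (Suc n))" for n
      proof -
        have "inverse (real (Suc (q n))) \<le> inverse (real (Suc n))"
          using seq_suble[OF q, of n] by (simp add: le_imp_inverse_le)
        then show ?thesis using cl[of "q n"] by linarith
      qed
      then show "\<forall>\<^sub>F n in sequentially. \<bar>mlt (ts' (q n)) (xs (q n)) i0 - lambda g h k (xs (q n)) i0\<bar> \<le> inverse (real (Suc n))"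
        by simp
    qed (intro tendsto_const LIMSEQ_inverse_real_of_nat)+
    then show ?thesis by (simp add: tendsto_rabs_zero_iff)
  qed
  have "(\<lambda>n. mlt (ts' (q n)) (xs (q n)) i0 - mlt (ts (q n)) (xs (q n)) i0
            - (mlt (ts' (q n)) (xs (q n)) i0 - lambda g h k (xs (q n)) i0))
        \<longlonglongrightarrow> lambda g h k x0 i0 - lambda g h k x0 i0 - 0"
    by (intro tendsto_intros An Bn Cn)
  then have "(\<lambda>n. lambda g h k (xs (q n)) i0 - mlt (ts (q n)) (xs (q n)) i0) \<longlonglongrightarrow> 0"
    by simp
  then have "(\<lambda>n. \<bar>lambda g h k (xs (q n)) i0 - mlt (ts (q n)) (xs (q n)) i0\<bar>) \<longlonglongrightarrow> 0"
    by (simp add: tendsto_rabs_zero_iff)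
  moreover have "\<forall>n. \<epsilon> \<le> \<bar>lambda g h k (xs (q n)) i0 - mlt (ts (q n)) (xs (q n)) i0\<bar>"
    using big less_imp_le by blast
  ultimately have "\<epsilon> \<le> 0" by (intro LIMSEQ_le_const) auto
  then show False using e by simp
qed

end

theorem lemma15:
  fixes f g :: "real^'n \<Rightarrow> real^'m \<Rightarrow> real"
    and h :: "nat \<Rightarrow> real^'n \<Rightarrow> real^'m \<Rightarrow> real"
    and k :: nat and X :: "(real^'n) set" and \<mu>g :: real
  assumes A1: "C1_fun (case_prod f)" "C2_fun (case_prod g)" "\<forall>i<k. C2_fun (case_prod (h i))"
    and A2: "convex X" "compact X" "\<forall>x\<in>X. \<exists>y. \<forall>i<k. h i x y < 0"
    and A3: "\<forall>x\<in>X. \<forall>c::nat \<Rightarrow> real.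
               (\<Sum>i\<in>{i. i < k \<and> h i x (ystar g h k x) = 0}. c i *\<^sub>R grad_y (h i) x (ystar g h k x)) = 0
               \<longrightarrow> (\<forall>i\<in>{i. i < k \<and> h i x (ystar g h k x) = 0}. c i = 0)"
    and SC: "\<mu>g > 0" "\<forall>x\<in>X. strongly_convex_on UNIV \<mu>g (g x)"
            "\<forall>x\<in>X. \<forall>i<k. convex_on UNIV (h i x)"
  shows "\<forall>i<k. \<forall>\<epsilon>>0. \<exists>T>0. \<forall>x\<in>X. \<forall>t. 0 < t \<and> t \<le> T \<longrightarrow>
           \<bar>lambda g h k x i - t / (- h i x (ybar g h k t x))\<bar> \<le> \<epsilon>"
proof -
  obtain Gy where dg: "\<forall>x y. ((\<lambda>v. g x v) has_derivative (\<lambda>w. Gy x y \<bullet> w)) (at y)"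
    and cGy: "continuous_on UNIV (case_prod Gy)" and cg: "continuous_on UNIV (case_prod g)"
    using C2_partial[OF A1(2)] by blast
  have "\<forall>i. \<exists>H. i<k \<longrightarrow> ((\<forall>x y. ((\<lambda>v. h i x v) has_derivative (\<lambda>w. H x y \<bullet> w)) (at y))
            \<and> continuous_on UNIV (case_prod H) \<and> continuous_on UNIV (case_prod (h i)))"
    using C2_partial A1(3) by blast
  then obtain Hy where Hy: "\<And>i. i<k \<Longrightarrow> (\<forall>x y. ((\<lambda>v. h i x v) has_derivative (\<lambda>w. Hy i x y \<bullet> w)) (at y))
            \<and> continuous_on UNIV (case_prod (Hy i)) \<and> continuous_on UNIV (case_prod (h i))"
    by metis
  interpret B: BL g h k X \<mu>g Gy Hy
  proof
    show "continuous_on UNIV (case_prod g)" by (rule cg)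
    show "continuous_on UNIV (case_prod (h i))" if "i<k" for i using Hy[OF that] by blast
    show "((\<lambda>v. g x v) has_derivative (\<lambda>w. Gy x y \<bullet> w)) (at y)" for x y using dg by blast
    show "continuous_on UNIV (case_prod Gy)" by (rule cGy)
    show "((\<lambda>v. h i x v) has_derivative (\<lambda>w. Hy i x y \<bullet> w)) (at y)" if "i<k" for i x y using Hy[OF that] by blast
    show "continuous_on UNIV (case_prod (Hy i))" if "i<k" for i using Hy[OF that] by blast
    show "compact X" by (rule A2(2))
    show "\<exists>y. \<forall>i<k. h i x y < 0" if "x\<in>X" for x using A2(3) that by blast
    show "\<forall>i\<in>{i. i < k \<and> h i x (ystar g h k x) = 0}. c i = 0"
      if x: "x\<in>X" and s: "(\<Sum>i\<in>{i. i < k \<and> h i x (ystar g h k x) = 0}. c i *\<^sub>R Hy i x (ystar g h k x)) = 0" for x c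
    proof -
      have "(\<Sum>i\<in>{i. i < k \<and> h i x (ystar g h k x) = 0}. c i *\<^sub>R grad_y (h i) x (ystar g h k x))
          = (\<Sum>i\<in>{i. i < k \<and> h i x (ystar g h k x) = 0}. c i *\<^sub>R Hy i x (ystar g h k x))"
      proof (rule sum.cong)
        fix i assume "i \<in> {i. i < k \<and> h i x (ystar g h k x) = 0}"
        then have "i<k" by simp
        then have "grad_y (h i) x (ystar g h k x) = Hy i x (ystar g h k x)"
          using Hy[OF \<open>i<k\<close>] by (intro grad_y_eq) blast
        then show "c i *\<^sub>R grad_y (h i) x (ystar g h k x) = c i *\<^sub>R Hy i x (ystar g h k x)" by simp
      qed simp
      then show ?thesis using A3 x s by simp
    qed
    show "\<mu>g > 0" by (rule SC(1))
    show "strongly_convex_on UNIV \<mu>g (g x)" if "x\<in>X" for x using SC(2) that by blast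
    show "convex_on UNIV (h i x)" if "x\<in>X" "i<k" for x i using SC(3) that by blast
  qed
  show ?thesis
  proof (intro allI impI)
    fix i and \<epsilon> :: real assume i: "i<k" and e: "\<epsilon> > 0"
    from B.main[OF i e] show "\<exists>T>0. \<forall>x\<in>X. \<forall>t. 0 < t \<and> t \<le> T \<longrightarrow>
           \<bar>lambda g h k x i - t / (- h i x (ybar g h k t x))\<bar> \<le> \<epsilon>"
      unfolding B.mlt_def B.yb_def .
  qed
qed

end
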